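(* Let $\mathcal{L}$ and $\mathcal{L}'$ be lattices and $f,g:\mathbb{N}\to\mathbb{N}$. If $\mathcal{L}$ is $\Theta(f(n))$ and $\mathcal{L}'$ is $\Theta(g(n))$, then the vertical sum $\mathcal{L}\oplus_v\mathcal{L}'$ and the horizontal sum $\mathcal{L}\oplus_h\mathcal{L}'$ are both $\Theta(f(n)+g(n))$.
   Context: A lattice means a partially ordered set $(\mathcal{L},\sqsubseteq)$ with least element $\bot$ in which any two elements have a least upper bound $\sqcup$; $\bigsqcup S$ denotes the least upper bound of a finite set ($\bigsqcup\emptyset=\bot$). Let $\mathcal{L}\uplus\mathcal{L}'=\{0\}\times\mathcal{L}\cup\{1\}\times\mathcal{L}'$. The vertical sum $\mathcal{L}\oplus_v\mathcal{L}'$ has elements $\mathcal{L}\uplus\mathcal{L}'$ with $\ell\sqsubseteq\ell'$ iff either $\ell=(0,\jmath)$ and $\ell'=(1,\jmath')$, or $\ell=(i,\jmath)$, $\ell'=(i,\jmath')$ and $\jmath\sqsubseteq\jmath'$ (i.e. $\mathcal{L}'$ placed on top of $\mathcal{L}$). The horizontal sum $\mathcal{L}\oplus_h\mathcal{L}'$ has elements $\{0,1\}\cup(\mathcal{L}\uplus\mathcal{L}')$ (with $0,1$ fresh elements) and $\ell\sqsubseteq\ell'$ iff $\ell=0$, or $\ell'=1$, or $\ell=(i,\jmath)$, $\ell'=(i,\jmath')$ and $\jmath\sqsubseteq\jmath'$ (i.e. $\mathcal{L}$ and $\mathcal{L}'$ side by side with a new bottom $0$ and new top $1$). The closure set of a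 finite $S$ is $C(S)=\{\bigsqcup S' : S'\subseteq S\}$, $CS_{\mathcal{L}}(n)=\max\{|C(S)| : S\subseteq\mathcal{L}\text{ finite}, |S|\le n\}$. For $f,g:\mathbb{N}\to\mathbb{N}$, $f$ is $O(g)$ (resp. $\Omega(g)$) iff there exist $N_0\in\mathbb{N}$ and rational $C>0$ with $f(n)\le Cg(n)$ (resp. $f(n)\ge Cg(n)$) for all $n\ge N_0$; $\Theta$ means both. A lattice is $\Theta(f(n))$ iff its $CS$ is. *)

theory Defs
  imports Complex_Main
begin

text \<open>A lattice (in the sense of the paper: a join-semilattice with least element)
  is given by a carrier set A and an order relation le on it.\<close>

definition is_lub :: "'a set \<Rightarrow> ('a \<Rightarrow> 'a \<Rightarrow> bool) \<Rightarrow> 'a set \<Rightarrow> 'a \<Rightarrow> bool" where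
  "is_lub A le S z \<longleftrightarrow> z \<in> A \<and> (\<forall>s\<in>S. le s z) \<and> (\<forall>w\<in>A. (\<forall>s\<in>S. le s w) \<longrightarrow> le z w)"

definition is_lattice :: "'a set \<Rightarrow> ('a \<Rightarrow> 'a \<Rightarrow> bool) \<Rightarrow> bool" where
  "is_lattice A le \<longleftrightarrow>
     (\<forall>x\<in>A. le x x) \<and>
     (\<forall>x\<in>A. \<forall>y\<in>A. le x y \<and> le y x \<longrightarrow> x = y) \<and>
     (\<forall>x\<in>A. \<forall>y\<in>A. \<forall>z\<in>A. le x y \<and> le y z \<longrightarrow> le x z) \<and>
     (\<exists>b\<in>A. \<forall>x\<in>A. le b x) \<and>
     (\<forall>x\<in>A. \<forall>y\<in>A. \<exists>z. is_lub A le {x, y} z)"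

definition closure_set :: "'a set \<Rightarrow> ('a \<Rightarrow> 'a \<Rightarrow> bool) \<Rightarrow> 'a set \<Rightarrow> 'a set" where
  "closure_set A le S = {z. \<exists>S'. S' \<subseteq> S \<and> is_lub A le S' z}"

definition CS :: "'a set \<Rightarrow> ('a \<Rightarrow> 'a \<Rightarrow> bool) \<Rightarrow> nat \<Rightarrow> nat" where
  "CS A le n = Max {card (closure_set A le S) | S. S \<subseteq> A \<and> finite S \<and> card S \<le> n}"

definition bigO :: "(nat \<Rightarrow> nat) \<Rightarrow> (nat \<Rightarrow> nat) \<Rightarrow> bool" where
  "bigO f g \<longleftrightarrow> (\<exists>N0::nat. \<exists>C::rat. C > 0 \<and> (\<forall>n\<ge>N0. of_nat (f n) \<le> C * of_nat (g n)))"

definition bigOmega :: "(nat \<Rightarrow> nat) \<Rightarrow> (nat \<Rightarrow> nat) \<Rightarrow> bool" where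
  "bigOmega f g \<longleftrightarrow> (\<exists>N0::nat. \<exists>C::rat. C > 0 \<and> (\<forall>n\<ge>N0. of_nat (f n) \<ge> C * of_nat (g n)))"

definition bigTheta :: "(nat \<Rightarrow> nat) \<Rightarrow> (nat \<Rightarrow> nat) \<Rightarrow> bool" where
  "bigTheta f g \<longleftrightarrow> bigO f g \<and> bigOmega f g"

text \<open>Vertical sum: carrier Inl`A \<union> Inr`B (Inl = tag 0, Inr = tag 1), B placed on top of A.\<close>
definition vsum_carrier :: "'a set \<Rightarrow> 'b set \<Rightarrow> ('a + 'b) set" where
  "vsum_carrier A B = Inl ` A \<union> Inr ` B"

fun vsum_le :: "('a \<Rightarrow> 'a \<Rightarrow> bool) \<Rightarrow> ('b \<Rightarrow> 'b \<Rightarrow> bool) \<Rightarrow> 'a + 'b \<Rightarrow> 'a + 'b \<Rightarrow> bool" where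
  "vsum_le le le' (Inl a) (Inl b) = le a b"
| "vsum_le le le' (Inr a) (Inr b) = le' a b"
| "vsum_le le le' (Inl a) (Inr b) = True"
| "vsum_le le le' (Inr a) (Inl b) = False"

text \<open>Horizontal sum: fresh bottom HBot (= 0) and top HTop (= 1), A and B side by side.\<close>
datatype ('a, 'b) hsum = HBot | HTop | HL 'a | HR 'b

definition hsum_carrier :: "'a set \<Rightarrow> 'b set \<Rightarrow> ('a, 'b) hsum set" where
  "hsum_carrier A B = {HBot, HTop} \<union> HL ` A \<union> HR ` B"

definition hsum_le :: "('a \<Rightarrow> 'a \<Rightarrow> bool) \<Rightarrow> ('b \<Rightarrow> 'b \<Rightarrow> bool) \<Rightarrow> ('a, 'b) hsum \<Rightarrow> ('a, 'b) hsum \<Rightarrow> bool" where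
  "hsum_le le le' x y \<longleftrightarrow> x = HBot \<or> y = HTop \<or>
     (\<exists>a b. x = HL a \<and> y = HL b \<and> le a b) \<or>
     (\<exists>a b. x = HR a \<and> y = HR b \<and> le' a b)"

end

theory Submission
  imports Defs
begin

lemma lub_unique:
  assumes "is_lattice A le" "is_lub A le S x" "is_lub A le S y"
  shows "x = y"
proof -
  have "x \<in> A" "y \<in> A" "le x y" "le y x" using assms(2,3) unfolding is_lub_def by auto
  then show ?thesis using assms(1) unfolding is_lattice_def by blast
qed

lemma closure_finite:
  assumes "is_lattice A le" "finite S"
  shows "finite (closure_set A le S) \<and> card (closure_set A le S) \<le> 2 ^ card S"
proof -
  have sub: "closure_set A le S \<subseteq> (\<lambda>S'. THE z. is_lub A le S' z) ` Pow S"
  proof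
    fix z assume "z \<in> closure_set A le S"
    then obtain S' where S': "S' \<subseteq> S" "is_lub A le S' z" unfolding closure_set_def by blast
    have "(THE z. is_lub A le S' z) = z"
    proof (rule the_equality)
      show "is_lub A le S' z" by (rule S'(2))
      fix y assume "is_lub A le S' y"
      then show "y = z" using lub_unique[OF assms(1) _ S'(2)] by blast
    qed
    moreover have "S' \<in> Pow S" using S'(1) by simp
    ultimately show "z \<in> (\<lambda>S'. THE z. is_lub A le S' z) ` Pow S" by (metis image_eqI)
  qed
  have fin: "finite ((\<lambda>S'. THE z. is_lub A le S' z) ` Pow S)" using assms(2) by simp
  have "card (closure_set A le S) \<le> card ((\<lambda>S'. THE z. is_lub A le S' z) ` Pow S)"
    by (rule card_mono[OF fin sub])
  also have "\<dots> \<le> card (Pow S)" by (rule card_image_le) (simp add: assms(2))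
  also have "\<dots> = 2 ^ card S" using assms(2) by (simp add: card_Pow)
  finally show ?thesis using finite_subset[OF sub fin] by simp
qed

lemma CS_bound:
  assumes "\<And>S. S \<subseteq> A \<Longrightarrow> finite S \<Longrightarrow> card S \<le> n \<Longrightarrow> card (closure_set A le S) \<le> X"
  shows "CS A le n \<le> X"
    and "S \<subseteq> A \<Longrightarrow> finite S \<Longrightarrow> card S \<le> n \<Longrightarrow> card (closure_set A le S) \<le> CS A le n"
    and "\<exists>S. S \<subseteq> A \<and> finite S \<and> card S \<le> n \<and> CS A le n = card (closure_set A le S)"
proof -
  let ?M = "{card (closure_set A le S) | S. S \<subseteq> A \<and> finite S \<and> card S \<le> n}"
  have "?M \<subseteq> {..X}"
  proof
    fix m assume "m \<in> ?M"
    then obtain S where "S \<subseteq> A" "finite S" "card S \<le> n" "m = card (closure_set A le S)" by blast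
    then show "m \<in> {..X}" using assms by simp
  qed
  then have fin: "finite ?M" using finite_subset by blast
  have "card (closure_set A le {}) \<in> ?M"
    by (rule CollectI, rule exI[of _ "{}"]) simp
  then have ne: "?M \<noteq> {}" by blast
  show "CS A le n \<le> X" unfolding CS_def
  proof (rule Max.boundedI[OF fin ne])
    fix m assume "m \<in> ?M"
    then obtain S where "S \<subseteq> A" "finite S" "card S \<le> n" "m = card (closure_set A le S)" by blast
    then show "m \<le> X" using assms by simp
  qed
  show "S \<subseteq> A \<Longrightarrow> finite S \<Longrightarrow> card S \<le> n \<Longrightarrow> card (closure_set A le S) \<le> CS A le n"
  proof -
    assume "S \<subseteq> A" "finite S" "card S \<le> n"
    then have "card (closure_set A le S) \<in> ?M" by (intro CollectI exI[of _ S]) simp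
    then show ?thesis unfolding CS_def by (rule Max_ge[OF fin])
  qed
  have "Max ?M \<in> ?M" using fin ne by (rule Max_in)
  then obtain S where "S \<subseteq> A" "finite S" "card S \<le> n" "Max ?M = card (closure_set A le S)"
    by (auto simp only: mem_Collect_eq)
  then show "\<exists>S. S \<subseteq> A \<and> finite S \<and> card S \<le> n \<and> CS A le n = card (closure_set A le S)"
    unfolding CS_def by (intro exI[of _ S]) simp
qed

lemma lat_bound:
  assumes "is_lattice A le" "S \<subseteq> A" "finite S" "card S \<le> n"
  shows "card (closure_set A le S) \<le> (2::nat) ^ n"
proof -
  have "card (closure_set A le S) \<le> 2 ^ card S" using closure_finite assms by blast
  also have "\<dots> \<le> 2 ^ n" using assms(4) by (simp add: power_increasing)
  finally show ?thesis .
qed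

lemma CS_ge:
  assumes "is_lattice A le" "S \<subseteq> A" "finite S" "card S \<le> n"
  shows "card (closure_set A le S) \<le> CS A le n"
  using CS_bound(2)[OF lat_bound[OF assms(1)]] assms by blast

lemma CS_att:
  assumes "is_lattice A le"
  shows "\<exists>S. S \<subseteq> A \<and> finite S \<and> card S \<le> n \<and> CS A le n = card (closure_set A le S)"
  using CS_bound(3)[OF lat_bound[OF assms(1)]] by blast

lemma bot_lub:
  assumes "is_lattice A le"
  obtains b where "b \<in> A" "is_lub A le {} b" "\<And>z. is_lub A le {} z \<Longrightarrow> z = b"
proof -
  obtain b where "b \<in> A" "\<forall>x\<in>A. le b x" using assms unfolding is_lattice_def by blast
  then have "is_lub A le {} b" unfolding is_lub_def by auto
  then show ?thesis using that \<open>b \<in> A\<close> lub_unique[OF assms] by blast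
qed

lemma CS_pos:
  assumes "is_lattice A le"
  shows "1 \<le> CS A le n"
proof -
  obtain b where "is_lub A le {} b" using bot_lub[OF assms] by blast
  then have "b \<in> closure_set A le {}" unfolding closure_set_def by auto
  then have "closure_set A le {} \<noteq> {}" by auto
  moreover have "finite (closure_set A le {})" using closure_finite[OF assms] by simp
  ultimately have "1 \<le> card (closure_set A le {})" by (simp add: Suc_le_eq card_gt_0_iff)
  also have "\<dots> \<le> CS A le n" using CS_ge[OF assms] by simp
  finally show ?thesis .
qed


lemma card_lower_generic:
  assumes "finite CA" "finite CX" "bz \<in> CX" "inj_on e CA"
    and "\<And>z. z \<in> CA \<Longrightarrow> z \<noteq> bt \<Longrightarrow> e z \<in> CX"
    and "bz \<notin> e ` (CA - {bt})"
  shows "card CA \<le> card CX"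
proof -
  have "card CA \<le> card (CA - {bt}) + 1"
    using assms(1) by (metis add.commute card_Diff1_le card_Suc_Diff1 le_refl plus_1_eq_Suc
        Suc_leD card_Diff_singleton_if nat_le_linear)
  also have "card (CA - {bt}) = card (e ` (CA - {bt}))"
    using assms(4) by (simp add: card_image inj_on_diff)
  also have "card (e ` (CA - {bt})) + 1 = card (insert bz (e ` (CA - {bt})))"
    using assms(1,6) by simp
  also have "\<dots> \<le> card CX"
    using assms(2,3,5) by (intro card_mono) auto
  finally show ?thesis .
qed

lemma card_vimage_le:
  assumes "inj f" "finite S"
  shows "card (f -` S) \<le> card S"
proof -
  have "card (f -` S) = card (f ` (f -` S))"
    by (rule card_image[symmetric], rule inj_on_subset[OF assms(1)]) simp
  also have "\<dots> \<le> card S" using assms(2) by (intro card_mono) auto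
  finally show ?thesis .
qed


lemma vsum_incl:
  assumes "S \<subseteq> vsum_carrier A B"
  shows "closure_set (vsum_carrier A B) (vsum_le le le') S
     \<subseteq> Inl ` closure_set A le (Inl -` S) \<union> Inr ` closure_set B le' (Inr -` S)"
proof
  fix z assume "z \<in> closure_set (vsum_carrier A B) (vsum_le le le') S"
  then obtain S' where S'S: "S' \<subseteq> S" and lub: "is_lub (vsum_carrier A B) (vsum_le le le') S' z"
    unfolding closure_set_def by blast
  have zV: "z \<in> vsum_carrier A B" and ub: "\<And>s. s \<in> S' \<Longrightarrow> vsum_le le le' s z"
    and least: "\<And>w. w \<in> vsum_carrier A B \<Longrightarrow> (\<forall>s\<in>S'. vsum_le le le' s w) \<Longrightarrow> vsum_le le le' z w"
    using lub unfolding is_lub_def by auto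
  have S'V: "S' \<subseteq> vsum_carrier A B" using S'S assms by blast
  show "z \<in> Inl ` closure_set A le (Inl -` S) \<union> Inr ` closure_set B le' (Inr -` S)"
  proof (cases z)
    case (Inl a)
    have aA: "a \<in> A" using zV Inl unfolding vsum_carrier_def by auto
    have isl: "\<And>s. s \<in> S' \<Longrightarrow> \<exists>x. s = Inl x"
    proof -
      fix s assume "s \<in> S'"
      then have "vsum_le le le' s (Inl a)" using ub Inl by simp
      then show "\<exists>x. s = Inl x" by (cases s) auto
    qed
    have "is_lub A le (Inl -` S') a"
      unfolding is_lub_def
    proof (intro conjI ballI impI)
      show "a \<in> A" by (rule aA)
      fix x assume "x \<in> Inl -` S'"
      then show "le x a" using ub[of "Inl x"] Inl by simp
    next
      fix w assume wA: "w \<in> A" and H: "\<forall>s\<in>Inl -` S'. le s w"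
      have "Inl w \<in> vsum_carrier A B" using wA unfolding vsum_carrier_def by simp
      moreover have "\<forall>s\<in>S'. vsum_le le le' s (Inl w)"
      proof
        fix s assume sS: "s \<in> S'"
        then obtain x where "s = Inl x" using isl by blast
        then show "vsum_le le le' s (Inl w)" using H sS by simp
      qed
      ultimately have "vsum_le le le' z (Inl w)" by (rule least)
      then show "le a w" using Inl by simp
    qed
    moreover have "Inl -` S' \<subseteq> Inl -` S" using S'S by blast
    ultimately have "a \<in> closure_set A le (Inl -` S)" unfolding closure_set_def by blast
    then show ?thesis using Inl by blast
  next
    case (Inr b)
    have bB: "b \<in> B" using zV Inr unfolding vsum_carrier_def by auto
    have "is_lub B le' (Inr -` S') b"
      unfolding is_lub_def
    proof (intro conjI ballI impI)
      show "b \<in> B" by (rule bB)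
      fix x assume "x \<in> Inr -` S'"
      then show "le' x b" using ub[of "Inr x"] Inr by simp
    next
      fix w assume wB: "w \<in> B" and H: "\<forall>s\<in>Inr -` S'. le' s w"
      have "Inr w \<in> vsum_carrier A B" using wB unfolding vsum_carrier_def by simp
      moreover have "\<forall>s\<in>S'. vsum_le le le' s (Inr w)"
      proof
        fix s assume sS: "s \<in> S'"
        show "vsum_le le le' s (Inr w)"
        proof (cases s)
          case (Inl x) then show ?thesis by simp
        next
          case (Inr y) then show ?thesis using H sS by simp
        qed
      qed
      ultimately have "vsum_le le le' z (Inr w)" by (rule least)
      then show "le' b w" using Inr by simp
    qed
    moreover have "Inr -` S' \<subseteq> Inr -` S" using S'S by blast
    ultimately have "b \<in> closure_set B le' (Inr -` S)" unfolding closure_set_def by blast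
    then show ?thesis using Inr by blast
  qed
qed

lemma vsum_upper:
  fixes A :: "'a set" and B :: "'b set"
  assumes latA: "is_lattice A le" and latB: "is_lattice B le'"
    and SV: "S \<subseteq> vsum_carrier A B" and fin: "finite S" and cSn: "card S \<le> n"
  shows "finite (closure_set (vsum_carrier A B) (vsum_le le le') S)"
    and "card (closure_set (vsum_carrier A B) (vsum_le le le') S)
          \<le> CS A le n + CS B le' n"
proof -
  let ?SA = "Inl -` S" and ?SB = "Inr -` S"
  have finA: "finite ?SA" and finB: "finite ?SB" using fin by (auto intro: finite_vimageI)
  have SAA: "?SA \<subseteq> A" and SBB: "?SB \<subseteq> B" using SV unfolding vsum_carrier_def by auto
  have "card ?SA \<le> card S" and "card ?SB \<le> card S"
    by (intro card_vimage_le fin, simp add: inj_def)+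
  then have cA: "card ?SA \<le> n" and cB: "card ?SB \<le> n" using cSn by linarith+
  have fA: "finite (closure_set A le ?SA)" using closure_finite[OF latA finA] by blast
  have fB: "finite (closure_set B le' ?SB)" using closure_finite[OF latB finB] by blast
  let ?U = "Inl ` closure_set A le ?SA \<union> Inr ` closure_set B le' ?SB"
  have fU: "finite ?U" using fA fB by simp
  have sub: "closure_set (vsum_carrier A B) (vsum_le le le') S \<subseteq> ?U" by (rule vsum_incl[OF SV])
  show "finite (closure_set (vsum_carrier A B) (vsum_le le le') S)" using finite_subset[OF sub fU] .
  have "card (closure_set (vsum_carrier A B) (vsum_le le le') S) \<le> card ?U" by (rule card_mono[OF fU sub])
  also have "\<dots> \<le> card (Inl ` closure_set A le ?SA :: ('a + 'b) set) + card (Inr ` closure_set B le' ?SB :: ('a + 'b) set)"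
    by (rule card_Un_le)
  also have "\<dots> \<le> card (closure_set A le ?SA) + card (closure_set B le' ?SB)"
    by (intro add_mono card_image_le fA fB)
  also have "\<dots> \<le> CS A le n + CS B le' n"
    by (intro add_mono CS_ge latA latB SAA SBB finA finB cA cB)
  finally show "card (closure_set (vsum_carrier A B) (vsum_le le le') S)
          \<le> CS A le n + CS B le' n" .
qed

lemma bot_le:
  assumes "is_lub A le {} b" "x \<in> A"
  shows "le b x"
  using assms unfolding is_lub_def by blast

lemma vsum_CS:
  fixes A :: "'a set" and B :: "'b set"
  assumes latA: "is_lattice A le" and latB: "is_lattice B le'"
  shows "CS (vsum_carrier A B) (vsum_le le le') n \<le> CS A le n + CS B le' n"
    and "CS A le n \<le> CS (vsum_carrier A B) (vsum_le le le') n"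
    and "CS B le' n \<le> CS (vsum_carrier A B) (vsum_le le le') n"
proof -
  let ?V = "vsum_carrier A B" and ?vle = "vsum_le le le'"
  have bnd: "\<And>S. S \<subseteq> ?V \<Longrightarrow> finite S \<Longrightarrow> card S \<le> n \<Longrightarrow>
      card (closure_set ?V ?vle S) \<le> CS A le n + CS B le' n"
    using vsum_upper(2)[OF latA latB] by blast
  show "CS ?V ?vle n \<le> CS A le n + CS B le' n" by (rule CS_bound(1)[OF bnd])
  obtain bA where bA: "bA \<in> A" "is_lub A le {} bA" "\<And>z. is_lub A le {} z \<Longrightarrow> z = bA"
    using bot_lub[OF latA] by blast
  obtain bB where bB: "bB \<in> B" "is_lub B le' {} bB" "\<And>z. is_lub B le' {} z \<Longrightarrow> z = bB"
    using bot_lub[OF latB] by blast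
  have vbot: "is_lub ?V ?vle {} (Inl bA)"
    unfolding is_lub_def
  proof (intro conjI ballI impI)
    show "Inl bA \<in> ?V" using bA(1) unfolding vsum_carrier_def by simp
    fix w assume "w \<in> ?V"
    then show "?vle (Inl bA) w" using bot_le[OF bA(2)] unfolding vsum_carrier_def by auto
  qed simp
  have vbotC: "Inl bA \<in> closure_set ?V ?vle S" for S
    unfolding closure_set_def using vbot by blast
  obtain SA where SA: "SA \<subseteq> A" "finite SA" "card SA \<le> n" "CS A le n = card (closure_set A le SA)"
    using CS_att[OF latA] by blast
  have SAV: "Inl ` SA \<subseteq> ?V" using SA(1) unfolding vsum_carrier_def by auto
  have cSA: "card (Inl ` SA :: ('a + 'b) set) \<le> n" using SA(3) by (simp add: card_image)
  have "card (closure_set A le SA) \<le> card (closure_set ?V ?vle (Inl ` SA))"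
  proof (rule card_lower_generic[where e = Inl and bz = "Inl bA" and bt = bA])
    show "finite (closure_set A le SA)" using closure_finite[OF latA SA(2)] by blast
    show "finite (closure_set ?V ?vle (Inl ` SA))"
      using vsum_upper(1)[OF latA latB SAV] SA(2) cSA by blast
    show "Inl bA \<in> closure_set ?V ?vle (Inl ` SA)" by (rule vbotC)
    show "inj_on Inl (closure_set A le SA)" by simp
    show "Inl bA \<notin> Inl ` (closure_set A le SA - {bA})" by auto
    fix z assume "z \<in> closure_set A le SA"
    then obtain S' where S': "S' \<subseteq> SA" "is_lub A le S' z" unfolding closure_set_def by blast
    have "is_lub ?V ?vle (Inl ` S') (Inl z)"
      unfolding is_lub_def
    proof (intro conjI ballI impI)
      show "Inl z \<in> ?V" using S'(2) unfolding is_lub_def vsum_carrier_def by simp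
      fix s :: "'a + 'b" assume "s \<in> Inl ` S'"
      then show "?vle s (Inl z)" using S'(2) unfolding is_lub_def by auto
    next
      fix w assume wV: "w \<in> ?V" and H: "\<forall>s\<in>Inl ` S'. ?vle s w"
      show "?vle (Inl z) w"
      proof (cases w)
        case (Inl x)
        then have "x \<in> A" using wV unfolding vsum_carrier_def by auto
        moreover have "\<forall>s\<in>S'. le s x" using H Inl by auto
        ultimately show ?thesis using S'(2) Inl unfolding is_lub_def by simp
      next
        case (Inr y) then show ?thesis by simp
      qed
    qed
    moreover have "Inl ` S' \<subseteq> Inl ` SA" using S'(1) by blast
    ultimately show "Inl z \<in> closure_set ?V ?vle (Inl ` SA)" unfolding closure_set_def by blast
  qed
  also have "\<dots> \<le> CS ?V ?vle n" by (rule CS_bound(2)[OF bnd SAV]) (use SA(2) cSA in auto)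
  finally show "CS A le n \<le> CS ?V ?vle n" using SA(4) by simp
  obtain SB where SB: "SB \<subseteq> B" "finite SB" "card SB \<le> n" "CS B le' n = card (closure_set B le' SB)"
    using CS_att[OF latB] by blast
  have SBV: "Inr ` SB \<subseteq> ?V" using SB(1) unfolding vsum_carrier_def by auto
  have cSB: "card (Inr ` SB :: ('a + 'b) set) \<le> n" using SB(3) by (simp add: card_image)
  have "card (closure_set B le' SB) \<le> card (closure_set ?V ?vle (Inr ` SB))"
  proof (rule card_lower_generic[where e = Inr and bz = "Inl bA" and bt = bB])
    show "finite (closure_set B le' SB)" using closure_finite[OF latB SB(2)] by blast
    show "finite (closure_set ?V ?vle (Inr ` SB))"
      using vsum_upper(1)[OF latA latB SBV] SB(2) cSB by blast
    show "Inl bA \<in> closure_set ?V ?vle (Inr ` SB)" by (rule vbotC)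
    show "inj_on Inr (closure_set B le' SB)" by simp
    show "Inl bA \<notin> Inr ` (closure_set B le' SB - {bB})" by auto
    fix z assume "z \<in> closure_set B le' SB" "z \<noteq> bB"
    then obtain S' where S': "S' \<subseteq> SB" "is_lub B le' S' z" unfolding closure_set_def by blast
    have "S' \<noteq> {}" using S'(2) bB(3) \<open>z \<noteq> bB\<close> by blast
    then obtain s0 where s0: "s0 \<in> S'" by blast
    have "is_lub ?V ?vle (Inr ` S') (Inr z)"
      unfolding is_lub_def
    proof (intro conjI ballI impI)
      show "Inr z \<in> ?V" using S'(2) unfolding is_lub_def vsum_carrier_def by simp
      fix s :: "'a + 'b" assume "s \<in> Inr ` S'"
      then show "?vle s (Inr z)" using S'(2) unfolding is_lub_def by auto
    next
      fix w assume wV: "w \<in> ?V" and H: "\<forall>s\<in>Inr ` S'. ?vle s w"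
      show "?vle (Inr z) w"
      proof (cases w)
        case (Inr x)
        then have "x \<in> B" using wV unfolding vsum_carrier_def by auto
        moreover have "\<forall>s\<in>S'. le' s x" using H Inr by auto
        ultimately show ?thesis using S'(2) Inr unfolding is_lub_def by simp
      next
        case (Inl y)
        have "?vle (Inr s0) w" using H s0 by blast
        then show ?thesis using Inl by simp
      qed
    qed
    moreover have "Inr ` S' \<subseteq> Inr ` SB" using S'(1) by blast
    ultimately show "Inr z \<in> closure_set ?V ?vle (Inr ` SB)" unfolding closure_set_def by blast
  qed
  also have "\<dots> \<le> CS ?V ?vle n" by (rule CS_bound(2)[OF bnd SBV]) (use SB(2) cSB in auto)
  finally show "CS B le' n \<le> CS ?V ?vle n" using SB(4) by simp
qed


lemma hle_simps[simp]:
  "hsum_le le le' HBot y"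
  "hsum_le le le' x HTop"
  "hsum_le le le' (HL a) (HL b) = le a b"
  "hsum_le le le' (HR a') (HR b') = le' a' b'"
  "\<not> hsum_le le le' (HL a) HBot"
  "\<not> hsum_le le le' (HR a') HBot"
  "\<not> hsum_le le le' HTop HBot"
  "\<not> hsum_le le le' (HL a) (HR b')"
  "\<not> hsum_le le le' (HR a') (HL b)"
  "\<not> hsum_le le le' HTop (HL b)"
  "\<not> hsum_le le le' HTop (HR b')"
  by (auto simp: hsum_le_def)

lemma hsum_incl:
  fixes A :: "'a set" and B :: "'b set"
  assumes "S \<subseteq> hsum_carrier A B"
  shows "closure_set (hsum_carrier A B) (hsum_le le le') S
     \<subseteq> {HBot, HTop} \<union> HL ` closure_set A le (HL -` S) \<union> HR ` closure_set B le' (HR -` S)"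
proof
  fix z assume "z \<in> closure_set (hsum_carrier A B) (hsum_le le le') S"
  then obtain S' where S'S: "S' \<subseteq> S" and lub: "is_lub (hsum_carrier A B) (hsum_le le le') S' z"
    unfolding closure_set_def by blast
  have zV: "z \<in> hsum_carrier A B" and ub: "\<And>s. s \<in> S' \<Longrightarrow> hsum_le le le' s z"
    and least: "\<And>w. w \<in> hsum_carrier A B \<Longrightarrow> (\<forall>s\<in>S'. hsum_le le le' s w) \<Longrightarrow> hsum_le le le' z w"
    using lub unfolding is_lub_def by auto
  show "z \<in> {HBot, HTop} \<union> HL ` closure_set A le (HL -` S) \<union> HR ` closure_set B le' (HR -` S)"
  proof (cases z)
    case HBot then show ?thesis by simp
  next
    case HTop then show ?thesis by simp
  next
    case (HL a)
    have aA: "a \<in> A" using zV HL unfolding hsum_carrier_def by auto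
    have isl: "\<And>s. s \<in> S' \<Longrightarrow> s = HBot \<or> (\<exists>x. s = HL x)"
    proof -
      fix s assume "s \<in> S'"
      then have "hsum_le le le' s (HL a)" using ub HL by simp
      then show "s = HBot \<or> (\<exists>x. s = HL x)" by (cases s) auto
    qed
    have "is_lub A le (HL -` S') a"
      unfolding is_lub_def
    proof (intro conjI ballI impI)
      show "a \<in> A" by (rule aA)
      fix x assume "x \<in> HL -` S'"
      then show "le x a" using ub[of "HL x"] HL by simp
    next
      fix w assume wA: "w \<in> A" and H: "\<forall>s\<in>HL -` S'. le s w"
      have "HL w \<in> hsum_carrier A B" using wA unfolding hsum_carrier_def by simp
      moreover have "\<forall>s\<in>S'. hsum_le le le' s (HL w)"
      proof
        fix s assume sS: "s \<in> S'"
        then consider "s = HBot" | x where "s = HL x" using isl by blast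
        then show "hsum_le le le' s (HL w)"
        proof cases
          case 1 then show ?thesis by simp
        next
          case (2 x) then show ?thesis using H sS by simp
        qed
      qed
      ultimately have "hsum_le le le' z (HL w)" by (rule least)
      then show "le a w" using HL by simp
    qed
    moreover have "HL -` S' \<subseteq> HL -` S" using S'S by blast
    ultimately have "a \<in> closure_set A le (HL -` S)" unfolding closure_set_def by blast
    then show ?thesis using HL by blast
  next
    case (HR a)
    have aA: "a \<in> B" using zV HR unfolding hsum_carrier_def by auto
    have isl: "\<And>s. s \<in> S' \<Longrightarrow> s = HBot \<or> (\<exists>x. s = HR x)"
    proof -
      fix s assume "s \<in> S'"
      then have "hsum_le le le' s (HR a)" using ub HR by simp
      then show "s = HBot \<or> (\<exists>x. s = HR x)" by (cases s) auto
    qed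
    have "is_lub B le' (HR -` S') a"
      unfolding is_lub_def
    proof (intro conjI ballI impI)
      show "a \<in> B" by (rule aA)
      fix x assume "x \<in> HR -` S'"
      then show "le' x a" using ub[of "HR x"] HR by simp
    next
      fix w assume wA: "w \<in> B" and H: "\<forall>s\<in>HR -` S'. le' s w"
      have "HR w \<in> hsum_carrier A B" using wA unfolding hsum_carrier_def by simp
      moreover have "\<forall>s\<in>S'. hsum_le le le' s (HR w)"
      proof
        fix s assume sS: "s \<in> S'"
        then consider "s = HBot" | x where "s = HR x" using isl by blast
        then show "hsum_le le le' s (HR w)"
        proof cases
          case 1 then show ?thesis by simp
        next
          case (2 x) then show ?thesis using H sS by simp
        qed
      qed
      ultimately have "hsum_le le le' z (HR w)" by (rule least)
      then show "le' a w" using HR by simp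
    qed
    moreover have "HR -` S' \<subseteq> HR -` S" using S'S by blast
    ultimately have "a \<in> closure_set B le' (HR -` S)" unfolding closure_set_def by blast
    then show ?thesis using HR by blast
  qed
qed

lemma hsum_upper:
  fixes A :: "'a set" and B :: "'b set"
  assumes latA: "is_lattice A le" and latB: "is_lattice B le'"
    and SV: "S \<subseteq> hsum_carrier A B" and fin: "finite S" and cSn: "card S \<le> n"
  shows "finite (closure_set (hsum_carrier A B) (hsum_le le le') S)"
    and "card (closure_set (hsum_carrier A B) (hsum_le le le') S)
          \<le> 2 + CS A le n + CS B le' n"
proof -
  let ?SA = "HL -` S" and ?SB = "HR -` S"
  have finA: "finite ?SA" and finB: "finite ?SB" by (intro finite_vimageI fin, simp add: inj_def)+
  have SAA: "?SA \<subseteq> A" and SBB: "?SB \<subseteq> B" using SV unfolding hsum_carrier_def by auto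
  have "card ?SA \<le> card S" and "card ?SB \<le> card S"
    by (intro card_vimage_le fin, simp add: inj_def)+
  then have cA: "card ?SA \<le> n" and cB: "card ?SB \<le> n" using cSn by linarith+
  have fA: "finite (closure_set A le ?SA)" using closure_finite[OF latA finA] by blast
  have fB: "finite (closure_set B le' ?SB)" using closure_finite[OF latB finB] by blast
  let ?U = "{HBot, HTop} \<union> HL ` closure_set A le ?SA \<union> HR ` closure_set B le' ?SB"
  have fU: "finite ?U" using fA fB by simp
  have sub: "closure_set (hsum_carrier A B) (hsum_le le le') S \<subseteq> ?U" by (rule hsum_incl[OF SV])
  show "finite (closure_set (hsum_carrier A B) (hsum_le le le') S)" using finite_subset[OF sub fU] .
  have "card (closure_set (hsum_carrier A B) (hsum_le le le') S) \<le> card ?U" by (rule card_mono[OF fU sub])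
  also have "\<dots> \<le> card ({HBot, HTop} \<union> HL ` closure_set A le ?SA :: ('a, 'b) hsum set)
      + card (HR ` closure_set B le' ?SB :: ('a, 'b) hsum set)"
    by (rule card_Un_le)
  also have "\<dots> \<le> card ({HBot, HTop} :: ('a, 'b) hsum set) + card (HL ` closure_set A le ?SA :: ('a, 'b) hsum set)
      + card (HR ` closure_set B le' ?SB :: ('a, 'b) hsum set)"
    by (intro add_mono card_Un_le le_refl)
  also have "\<dots> \<le> 2 + card (closure_set A le ?SA) + card (closure_set B le' ?SB)"
    by (intro add_mono card_image_le fA fB) simp
  also have "\<dots> \<le> 2 + CS A le n + CS B le' n"
    by (intro add_mono CS_ge latA latB SAA SBB finA finB cA cB le_refl)
  finally show "card (closure_set (hsum_carrier A B) (hsum_le le le') S)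
          \<le> 2 + CS A le n + CS B le' n" .
qed

lemma hsum_CS:
  fixes A :: "'a set" and B :: "'b set"
  assumes latA: "is_lattice A le" and latB: "is_lattice B le'"
  shows "CS (hsum_carrier A B) (hsum_le le le') n \<le> 2 + CS A le n + CS B le' n"
    and "CS A le n \<le> CS (hsum_carrier A B) (hsum_le le le') n"
    and "CS B le' n \<le> CS (hsum_carrier A B) (hsum_le le le') n"
proof -
  let ?V = "hsum_carrier A B" and ?vle = "hsum_le le le'"
  have bnd: "\<And>S. S \<subseteq> ?V \<Longrightarrow> finite S \<Longrightarrow> card S \<le> n \<Longrightarrow>
      card (closure_set ?V ?vle S) \<le> 2 + CS A le n + CS B le' n"
    using hsum_upper(2)[OF latA latB] by blast
  show "CS ?V ?vle n \<le> 2 + CS A le n + CS B le' n" by (rule CS_bound(1)[OF bnd])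
  obtain bA where bA: "bA \<in> A" "is_lub A le {} bA" "\<And>z. is_lub A le {} z \<Longrightarrow> z = bA"
    using bot_lub[OF latA] by blast
  obtain bB where bB: "bB \<in> B" "is_lub B le' {} bB" "\<And>z. is_lub B le' {} z \<Longrightarrow> z = bB"
    using bot_lub[OF latB] by blast
  have vbot: "is_lub ?V ?vle {} HBot"
    unfolding is_lub_def hsum_carrier_def by simp
  have vbotC: "HBot \<in> closure_set ?V ?vle S" for S
    unfolding closure_set_def using vbot by blast
  obtain SA where SA: "SA \<subseteq> A" "finite SA" "card SA \<le> n" "CS A le n = card (closure_set A le SA)"
    using CS_att[OF latA] by blast
  have SAV: "HL ` SA \<subseteq> ?V" using SA(1) unfolding hsum_carrier_def by auto
  have cSA: "card (HL ` SA :: ('a, 'b) hsum set) \<le> n" using SA(3) by (simp add: card_image inj_on_def)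
  have "card (closure_set A le SA) \<le> card (closure_set ?V ?vle (HL ` SA))"
  proof (rule card_lower_generic[where e = HL and bz = HBot and bt = bA])
    show "finite (closure_set A le SA)" using closure_finite[OF latA SA(2)] by blast
    show "finite (closure_set ?V ?vle (HL ` SA))"
      using hsum_upper(1)[OF latA latB SAV] SA(2) cSA by blast
    show "HBot \<in> closure_set ?V ?vle (HL ` SA)" by (rule vbotC)
    show "inj_on HL (closure_set A le SA)" by (simp add: inj_on_def)
    show "HBot \<notin> HL ` (closure_set A le SA - {bA})" by auto
    fix z assume "z \<in> closure_set A le SA" "z \<noteq> bA"
    then obtain S' where S': "S' \<subseteq> SA" "is_lub A le S' z" unfolding closure_set_def by blast
    have "S' \<noteq> {}" using S'(2) bA(3) \<open>z \<noteq> bA\<close> by blast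
    then obtain s0 where s0: "s0 \<in> S'" by blast
    have "is_lub ?V ?vle (HL ` S') (HL z)"
      unfolding is_lub_def
    proof (intro conjI ballI impI)
      show "HL z \<in> ?V" using S'(2) unfolding is_lub_def hsum_carrier_def by simp
      fix s :: "('a, 'b) hsum" assume "s \<in> HL ` S'"
      then show "?vle s (HL z)" using S'(2) unfolding is_lub_def by auto
    next
      fix w assume wV: "w \<in> ?V" and H: "\<forall>s\<in>HL ` S'. ?vle s w"
      have H0: "?vle (HL s0) w" using H s0 by blast
      show "?vle (HL z) w"
      proof (cases w)
        case (HL x)
        then have "x \<in> A" using wV unfolding hsum_carrier_def by auto
        moreover have "\<forall>s\<in>S'. le s x" using H HL by auto
        ultimately show ?thesis using S'(2) HL unfolding is_lub_def by simp
      qed (use H0 in auto)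
    qed
    moreover have "HL ` S' \<subseteq> HL ` SA" using S'(1) by blast
    ultimately show "HL z \<in> closure_set ?V ?vle (HL ` SA)" unfolding closure_set_def by blast
  qed
  also have "\<dots> \<le> CS ?V ?vle n" by (rule CS_bound(2)[OF bnd SAV]) (use SA(2) cSA in auto)
  finally show "CS A le n \<le> CS ?V ?vle n" using SA(4) by simp
  obtain SB where SB: "SB \<subseteq> B" "finite SB" "card SB \<le> n" "CS B le' n = card (closure_set B le' SB)"
    using CS_att[OF latB] by blast
  have SBV: "HR ` SB \<subseteq> ?V" using SB(1) unfolding hsum_carrier_def by auto
  have cSB: "card (HR ` SB :: ('a, 'b) hsum set) \<le> n" using SB(3) by (simp add: card_image inj_on_def)
  have "card (closure_set B le' SB) \<le> card (closure_set ?V ?vle (HR ` SB))"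
  proof (rule card_lower_generic[where e = HR and bz = HBot and bt = bB])
    show "finite (closure_set B le' SB)" using closure_finite[OF latB SB(2)] by blast
    show "finite (closure_set ?V ?vle (HR ` SB))"
      using hsum_upper(1)[OF latA latB SBV] SB(2) cSB by blast
    show "HBot \<in> closure_set ?V ?vle (HR ` SB)" by (rule vbotC)
    show "inj_on HR (closure_set B le' SB)" by (simp add: inj_on_def)
    show "HBot \<notin> HR ` (closure_set B le' SB - {bB})" by auto
    fix z assume "z \<in> closure_set B le' SB" "z \<noteq> bB"
    then obtain S' where S': "S' \<subseteq> SB" "is_lub B le' S' z" unfolding closure_set_def by blast
    have "S' \<noteq> {}" using S'(2) bB(3) \<open>z \<noteq> bB\<close> by blast
    then obtain s0 where s0: "s0 \<in> S'" by blast
    have "is_lub ?V ?vle (HR ` S') (HR z)"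
      unfolding is_lub_def
    proof (intro conjI ballI impI)
      show "HR z \<in> ?V" using S'(2) unfolding is_lub_def hsum_carrier_def by simp
      fix s :: "('a, 'b) hsum" assume "s \<in> HR ` S'"
      then show "?vle s (HR z)" using S'(2) unfolding is_lub_def by auto
    next
      fix w assume wV: "w \<in> ?V" and H: "\<forall>s\<in>HR ` S'. ?vle s w"
      have H0: "?vle (HR s0) w" using H s0 by blast
      show "?vle (HR z) w"
      proof (cases w)
        case (HR x)
        then have "x \<in> B" using wV unfolding hsum_carrier_def by auto
        moreover have "\<forall>s\<in>S'. le' s x" using H HR by auto
        ultimately show ?thesis using S'(2) HR unfolding is_lub_def by simp
      qed (use H0 in auto)
    qed
    moreover have "HR ` S' \<subseteq> HR ` SB" using S'(1) by blast
    ultimately show "HR z \<in> closure_set ?V ?vle (HR ` SB)" unfolding closure_set_def by blast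
  qed
  also have "\<dots> \<le> CS ?V ?vle n" by (rule CS_bound(2)[OF bnd SBV]) (use SB(2) cSB in auto)
  finally show "CS B le' n \<le> CS ?V ?vle n" using SB(4) by simp
qed


lemma theta_combine:
  fixes a b v f g :: "nat \<Rightarrow> nat"
  assumes TA: "bigTheta a f" and TB: "bigTheta b g"
    and up: "\<And>n. v n \<le> 2 + a n + b n" and loA: "\<And>n. a n \<le> v n" and loB: "\<And>n. b n \<le> v n"
    and pos: "\<And>n. 1 \<le> a n"
  shows "bigTheta v (\<lambda>n. f n + g n)"
proof -
  obtain N1 and C1 :: rat where C1: "C1 > 0" "\<forall>n\<ge>N1. of_nat (a n) \<le> C1 * of_nat (f n)"
    using TA unfolding bigTheta_def bigO_def by blast
  obtain N2 and C2 :: rat where C2: "C2 > 0" "\<forall>n\<ge>N2. of_nat (b n) \<le> C2 * of_nat (g n)"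
    using TB unfolding bigTheta_def bigO_def by blast
  obtain N3 and c1 :: rat where c1: "c1 > 0" "\<forall>n\<ge>N3. of_nat (a n) \<ge> c1 * of_nat (f n)"
    using TA unfolding bigTheta_def bigOmega_def by blast
  obtain N4 and c2 :: rat where c2: "c2 > 0" "\<forall>n\<ge>N4. of_nat (b n) \<ge> c2 * of_nat (g n)"
    using TB unfolding bigTheta_def bigOmega_def by blast
  have O: "bigO v (\<lambda>n. f n + g n)"
    unfolding bigO_def
  proof (intro exI conjI allI impI)
    show "(0::rat) < 3 * C1 + C2" using C1 C2 by simp
    fix n assume "max N1 N2 \<le> n"
    then have h1: "of_nat (a n) \<le> C1 * of_nat (f n)" and h2: "of_nat (b n) \<le> C2 * of_nat (g n)"
      using C1 C2 by auto
    define F :: rat where "F = of_nat (f n)"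
    define G :: rat where "G = of_nat (g n)"
    have F0: "F \<ge> 0" and G0: "G \<ge> 0" unfolding F_def G_def by simp_all
    have "(of_nat (v n) :: rat) \<le> 2 + of_nat (a n) + of_nat (b n)"
      using up[of n] by (metis of_nat_add of_nat_le_iff of_nat_numeral)
    also have "\<dots> \<le> 3 * of_nat (a n) + of_nat (b n)" using pos[of n] by simp
    also have "\<dots> \<le> 3 * (C1 * F) + C2 * G" using h1 h2 unfolding F_def G_def by simp
    also have "\<dots> \<le> (3 * C1 + C2) * (F + G)"
    proof -
      have "0 \<le> 3 * C1 * G" using C1 G0 by simp
      moreover have "0 \<le> C2 * F" using C2 F0 by simp
      ultimately show ?thesis by (simp add: algebra_simps)
    qed
    finally show "of_nat (v n) \<le> (3 * C1 + C2) * of_nat (f n + g n)"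
      unfolding F_def G_def by simp
  qed
  have Om: "bigOmega v (\<lambda>n. f n + g n)"
    unfolding bigOmega_def
  proof (intro exI conjI allI impI)
    show "(0::rat) < min c1 c2 / 2" using c1 c2 by simp
    fix n assume "max N3 N4 \<le> n"
    then have h1: "of_nat (a n) \<ge> c1 * of_nat (f n)" and h2: "of_nat (b n) \<ge> c2 * of_nat (g n)"
      using c1 c2 by auto
    define F :: rat where "F = of_nat (f n)"
    define G :: rat where "G = of_nat (g n)"
    have F0: "F \<ge> 0" and G0: "G \<ge> 0" unfolding F_def G_def by simp_all
    have m1: "min c1 c2 * F \<le> c1 * F" using F0 by (intro mult_right_mono) simp_all
    have m2: "min c1 c2 * G \<le> c2 * G" using G0 by (intro mult_right_mono) simp_all
    have va: "(of_nat (a n) :: rat) \<le> of_nat (v n)" using loA[of n] by simp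
    have vb: "(of_nat (b n) :: rat) \<le> of_nat (v n)" using loB[of n] by simp
    have "min c1 c2 / 2 * (F + G) = (min c1 c2 * F + min c1 c2 * G) / 2" by (simp add: algebra_simps)
    also have "\<dots> \<le> (c1 * F + c2 * G) / 2" using m1 m2 by simp
    also have "\<dots> \<le> of_nat (v n)" using h1 h2 va vb unfolding F_def G_def by simp
    finally show "min c1 c2 / 2 * of_nat (f n + g n) \<le> (of_nat (v n) :: rat)"
      unfolding F_def G_def by simp
  qed
  show ?thesis unfolding bigTheta_def using O Om by simp
qed

theorem mainTheorem5:
  fixes A :: "'a set" and le :: "'a \<Rightarrow> 'a \<Rightarrow> bool"
    and B :: "'b set" and le' :: "'b \<Rightarrow> 'b \<Rightarrow> bool"
    and f g :: "nat \<Rightarrow> nat"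
  assumes "is_lattice A le" and "is_lattice B le'"
    and "bigTheta (CS A le) f" and "bigTheta (CS B le') g"
  shows "bigTheta (CS (vsum_carrier A B) (vsum_le le le')) (\<lambda>n. f n + g n)
       \<and> bigTheta (CS (hsum_carrier A B) (hsum_le le le')) (\<lambda>n. f n + g n)"
proof
  show "bigTheta (CS (vsum_carrier A B) (vsum_le le le')) (\<lambda>n. f n + g n)"
  proof (rule theta_combine[OF assms(3,4)])
    fix n
    show "CS (vsum_carrier A B) (vsum_le le le') n \<le> 2 + CS A le n + CS B le' n"
      using vsum_CS(1)[OF assms(1,2), of n] by simp
    show "CS A le n \<le> CS (vsum_carrier A B) (vsum_le le le') n" by (rule vsum_CS(2)[OF assms(1,2)])
    show "CS B le' n \<le> CS (vsum_carrier A B) (vsum_le le le') n" by (rule vsum_CS(3)[OF assms(1,2)])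
    show "1 \<le> CS A le n" by (rule CS_pos[OF assms(1)])
  qed
  show "bigTheta (CS (hsum_carrier A B) (hsum_le le le')) (\<lambda>n. f n + g n)"
  proof (rule theta_combine[OF assms(3,4)])
    fix n
    show "CS (hsum_carrier A B) (hsum_le le le') n \<le> 2 + CS A le n + CS B le' n"
      by (rule hsum_CS(1)[OF assms(1,2)])
    show "CS A le n \<le> CS (hsum_carrier A B) (hsum_le le le') n" by (rule hsum_CS(2)[OF assms(1,2)])
    show "CS B le' n \<le> CS (hsum_carrier A B) (hsum_le le le') n" by (rule hsum_CS(3)[OF assms(1,2)])
    show "1 \<le> CS A le n" by (rule CS_pos[OF assms(1)])
  qed
qed

end
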